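(* Let $0<\mu\le L$ and $\frac{25\mu}{(12L-\mu)^2}\le s\le\frac{1}{4L}$. For $\beta\in[0,1]$ define $$A_\beta=\frac{1}{(1-\sqrt{\mu s})^2}\left[1-2Ls\cdot\frac{(\beta-\beta^2)\mu s+(3+\beta^2-2\beta)\sqrt{\mu s}+2-2\beta}{2\sqrt{\mu s}}\right],\qquad B_\beta=\frac{1}{1-\sqrt{\mu s}}+\frac{\beta^2Ls}{2}.$$ Then there exists $\beta_c\in[0,1]$, depending on $\mu,s,L$, such that $\frac{A_\beta}{B_\beta}\le\frac16$ for $0\le\beta\le\beta_c$ and $\frac{A_\beta}{B_\beta}>\frac16$ for $\beta_c<\beta\le1$. *)

theory Defs
  imports Complex_Main
begin

definition A_beta :: "real \<Rightarrow> real \<Rightarrow> real \<Rightarrow> real \<Rightarrow> real" where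
  "A_beta \<mu> L s \<beta> = (1 / (1 - sqrt (\<mu> * s))^2) *
     (1 - 2 * L * s * (((\<beta> - \<beta>^2) * \<mu> * s + (3 + \<beta>^2 - 2 * \<beta>) * sqrt (\<mu> * s) + 2 - 2 * \<beta>)
        / (2 * sqrt (\<mu> * s))))"

definition B_beta :: "real \<Rightarrow> real \<Rightarrow> real \<Rightarrow> real \<Rightarrow> real" where
  "B_beta \<mu> L s \<beta> = 1 / (1 - sqrt (\<mu> * s)) + \<beta>^2 * L * s / 2"

end

theory Submission
  imports Defs
begin

definition PP :: "real \<Rightarrow> real \<Rightarrow> real" where
  "PP x b = (b - b^2) * x^2 + (3 + b^2 - 2 * b) * x + 2 - 2 * b"

definition FF :: "real \<Rightarrow> real \<Rightarrow> real \<Rightarrow> real" where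
  "FF x t b = 6 * ((1 / (1 - x)^2) * (1 - 2 * t * (PP x b / (2 * x)))) - (1 / (1 - x) + b^2 * t / 2)"

lemma FF_alt: assumes "0 < x" "x < 1"
  shows "FF x t b = (6*x - 6*t*PP x b - x*(1-x) - x*(1-x)^2*b^2*t/2) / (x*(1-x)^2)"
proof -
  have "1 - x \<noteq> 0" "x \<noteq> 0" using assms by auto
  then show ?thesis unfolding FF_def by (simp add: divide_simps) (simp add: algebra_simps power2_eq_square)
qed

lemma FF_mono:
  assumes x: "0 < x" "x \<le> 1/2" and t: "0 < t" and b: "0 \<le> b1" "b1 < b2" "b2 \<le> 1"
  shows "FF x t b1 < FF x t b2"
proof -
  have x1: "1 - x > 0" using x by simp
  define N where "N b = 6*x - 6*t*PP x b - x*(1-x) - x*(1-x)^2*b^2*t/2" for b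
  have Fb: "FF x t b = N b / (x*(1-x)^2)" for b using FF_alt[of x t b] x N_def by simp
  have Neq: "N b2 - N b1 = (b2-b1)*t*(12 + 12*x - 6*x^2 - (6*(x-x^2) + x*(1-x)^2/2)*(b1+b2))"
    unfolding N_def PP_def by (simp add: field_simps power2_eq_square)
  have eq: "x*(1-x)^2*(FF x t b2 - FF x t b1) =
     (b2-b1)*t*(12 + 12*x - 6*x^2 - (6*(x-x^2) + x*(1-x)^2/2)*(b1+b2))"
    unfolding Fb Neq[symmetric] using x x1 by (simp add: diff_divide_distrib[symmetric])
  have c0: "6*(x-x^2) + x*(1-x)^2/2 \<ge> 0"
    using x by (simp add: power2_eq_square mult_nonneg_nonneg)
  have "(6*(x-x^2) + x*(1-x)^2/2)*(b1+b2) \<le> (6*(x-x^2) + x*(1-x)^2/2)*2"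
    using c0 b by (intro mult_left_mono) auto
  moreover have "x*(1-x)^2 \<le> 1"
  proof -
    have "(1-x)^2 \<le> 1^2" using x by (intro power_mono) auto
    then have "x*(1-x)^2 \<le> 1*1" using x by (intro mult_mono) auto
    then show ?thesis by simp
  qed
  moreover have "(6*(x-x^2) + x*(1-x)^2/2)*2 = 12*x - 12*x^2 + x*(1-x)^2"
    by (simp add: algebra_simps)
  moreover have "x^2 \<ge> 0" by simp
  ultimately have br: "12 + 12*x - 6*x^2 - (6*(x-x^2) + x*(1-x)^2/2)*(b1+b2) > 0"
    by linarith
  have "(b2-b1)*t*(12 + 12*x - 6*x^2 - (6*(x-x^2) + x*(1-x)^2/2)*(b1+b2)) > 0"
    using br b t by simp
  then have "x*(1-x)^2*(FF x t b2 - FF x t b1) > 0" using eq by simp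
  moreover have "x*(1-x)^2 > 0" using x x1 by simp
  ultimately show ?thesis by (simp add: zero_less_mult_iff)
qed

lemma FF_0:
  assumes x: "0 < x" "x \<le> 1/2" and t: "12 * t \<ge> x^2 + 5*x"
  shows "FF x t 0 < 0"
proof -
  have x1: "1 - x > 0" using x by simp
  have eq: "x*(1-x)^2*FF x t 0 = 6*x - 6*t*(3*x+2) - x*(1-x)"
  proof -
    have "FF x t 0 = (6*x - 6*t*(3*x+2) - x*(1-x)) / (x*(1-x)^2)"
      using FF_alt[of x t 0] x by (simp add: PP_def)
    then show ?thesis using x x1 by simp
  qed
  have "6*t*(3*x+2) \<ge> (x^2+5*x)*(3*x+2)/2"
  proof -
    have "(x^2+5*x)*(3*x+2) \<le> (12*t)*(3*x+2)" using t x by (intro mult_right_mono) auto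
    then show ?thesis by simp
  qed
  moreover have "x^3 > 0" "x^2 > 0" using x by auto
  ultimately have "x*(1-x)^2*FF x t 0 < 0" unfolding eq
    by (simp add: algebra_simps power2_eq_square power3_eq_cube)
  moreover have "x*(1-x)^2 > 0" using x x1 by simp
  ultimately show ?thesis
  proof -
    assume a: "x*(1-x)^2*FF x t 0 < 0" and p: "x*(1-x)^2 > 0"
    show ?thesis
    proof (rule ccontr)
      assume "\<not> FF x t 0 < 0"
      then have "x*(1-x)^2*FF x t 0 \<ge> 0" using p by simp
      then show False using a by simp
    qed
  qed
qed

theorem lemma5p6:
  fixes \<mu> L s :: real
  assumes "0 < \<mu>" "\<mu> \<le> L"
    and "25 * \<mu> / (12 * L - \<mu>)^2 \<le> s" "s \<le> 1 / (4 * L)"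
  shows "\<exists>\<beta>c \<in> {0..1}.
           (\<forall>\<beta>. 0 \<le> \<beta> \<and> \<beta> \<le> \<beta>c \<longrightarrow> A_beta \<mu> L s \<beta> / B_beta \<mu> L s \<beta> \<le> 1/6) \<and>
           (\<forall>\<beta>. \<beta>c < \<beta> \<and> \<beta> \<le> 1 \<longrightarrow> A_beta \<mu> L s \<beta> / B_beta \<mu> L s \<beta> > 1/6)"
proof -
  define x where "x = sqrt (\<mu> * s)"
  define t where "t = L * s"
  have L: "L > 0" using assms by simp
  have d: "12 * L - \<mu> > 0" using assms by simp
  have "25 * \<mu> / (12 * L - \<mu>)^2 > 0" using assms d by simp
  then have s: "s > 0" using assms(3) by linarith
  have t14: "t \<le> 1/4" using assms L unfolding t_def by (simp add: field_simps)
  have tpos: "t > 0" using L s t_def by simp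
  have xpos: "x > 0" using assms s x_def by simp
  have x2: "x^2 = \<mu> * s" using assms s x_def by simp
  have "\<mu> * s \<le> t" using assms s t_def by (simp add: mult_right_mono)
  then have "x^2 \<le> 1/4" using x2 t14 by simp
  then have "x^2 \<le> (1/2)^2" by (simp add: power_divide)
  then have xh: "x \<le> 1/2" by (rule power2_le_imp_le) simp
  have "25 * \<mu> \<le> s * (12 * L - \<mu>)^2" using assms d by (simp add: field_simps)
  then have "25 * \<mu> * s \<le> s * (12 * L - \<mu>)^2 * s" using s by (simp add: mult_right_mono)
  also have "\<dots> = (12 * t - x^2)^2" using x2 t_def by (simp add: power2_eq_square algebra_simps)
  finally have c: "25 * \<mu> * s \<le> (12 * t - x^2)^2" .
  have "(5*x)^2 = 25 * \<mu> * s" using x2 by (simp add: power_mult_distrib)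
  then have c5: "(5*x)^2 \<le> (12 * t - x^2)^2" using c by simp
  have c6: "12 * t - x^2 > 0" using d s x2 t_def by (simp add: algebra_simps)
  have "5*x \<le> 12 * t - x^2" using power2_le_imp_le[OF c5] c6 by linarith
  then have tl: "12 * t \<ge> x^2 + 5*x" by simp
  have sq: "(sqrt (\<mu>*s))^2 = \<mu>*s" using assms s by simp
  have AB: "A_beta \<mu> L s b / B_beta \<mu> L s b \<le> 1/6 \<longleftrightarrow> FF x t b \<le> 0" for b
  proof -
    have A: "A_beta \<mu> L s b = (1 / (1 - x)^2) * (1 - 2 * t * (PP x b / (2 * x)))"
      unfolding A_beta_def PP_def x_def t_def using sq by (simp add: mult.assoc)
    have B: "B_beta \<mu> L s b = 1 / (1 - x) + b^2 * t / 2"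
      unfolding B_beta_def x_def t_def by (simp add: mult.assoc)
    have "1/(1-x) > 0" using xh by simp
    moreover have "b^2*t/2 \<ge> 0" using tpos by simp
    ultimately have Bp: "B_beta \<mu> L s b > 0" unfolding B by linarith
    have "A_beta \<mu> L s b / B_beta \<mu> L s b \<le> 1/6 \<longleftrightarrow> 6 * A_beta \<mu> L s b \<le> B_beta \<mu> L s b"
      using Bp by (simp add: divide_le_eq mult.commute)
    also have "\<dots> \<longleftrightarrow> FF x t b \<le> 0" unfolding FF_def A B by simp
    finally show ?thesis .
  qed
  have mono: "0 \<le> b1 \<Longrightarrow> b1 < b2 \<Longrightarrow> b2 \<le> 1 \<Longrightarrow> FF x t b1 < FF x t b2" for b1 b2
    using FF_mono xpos xh tpos by blast
  have F0: "FF x t 0 < 0" using FF_0 xpos xh tl by blast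
  show ?thesis
  proof (cases "FF x t 1 \<le> 0")
    case True
    show ?thesis
    proof (rule bexI[of _ 1], intro conjI allI impI)
      fix b assume "0 \<le> b \<and> b \<le> (1::real)"
      then have "FF x t b \<le> 0" using mono[of b 1] True by force
      then show "A_beta \<mu> L s b / B_beta \<mu> L s b \<le> 1/6" using AB by simp
    next
      fix b :: real assume "1 < b \<and> b \<le> 1"
      then show "A_beta \<mu> L s b / B_beta \<mu> L s b > 1/6" by linarith
    qed simp
  next
    case False
    have cont: "\<forall>y. 0 \<le> y \<and> y \<le> 1 \<longrightarrow> isCont (FF x t) y"
    proof -
      have e: "FF x t = (\<lambda>b. 6 * ((1 / (1 - x)^2) * (1 - 2 * t * (((b - b^2) * x^2 + (3 + b^2 - 2 * b) * x + 2 - 2 * b) / (2 * x)))) - (1 / (1 - x) + b^2 * t / 2))"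
        by (rule ext) (simp only: FF_def PP_def)
      have "continuous_on UNIV (\<lambda>b. 6 * ((1 / (1 - x)^2) * (1 - 2 * t * (((b - b^2) * x^2 + (3 + b^2 - 2 * b) * x + 2 - 2 * b) / (2 * x)))) - (1 / (1 - x) + b^2 * t / 2))"
        by (intro continuous_on_diff continuous_on_mult continuous_on_add continuous_on_const continuous_on_id continuous_on_power continuous_on_divide continuous_on_mult_left continuous_on_mult_right) (use xpos in auto)
      then show ?thesis unfolding e using continuous_on_eq_continuous_at[of UNIV] by blast
    qed
    obtain c where c: "0 \<le> c" "c \<le> 1" "FF x t c = 0"
    proof -
      have "\<exists>c\<ge>0. c \<le> 1 \<and> FF x t c = 0"
        using IVT[of "FF x t" 0 0 1, OF _ _ _ cont] F0 False by simp
      then show ?thesis using that by blast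
    qed
    show ?thesis
    proof (rule bexI[of _ c], intro conjI allI impI)
      fix b assume h: "0 \<le> b \<and> b \<le> c"
      then have "FF x t b \<le> 0" using mono[of b c] c by force
      then show "A_beta \<mu> L s b / B_beta \<mu> L s b \<le> 1/6" using AB by simp
    next
      fix b assume h: "c < b \<and> b \<le> 1"
      then have "FF x t b > 0" using mono[of c b] c by force
      then show "A_beta \<mu> L s b / B_beta \<mu> L s b > 1/6" using AB[of b] by simp
    qed (use c in auto)
  qed
qed

end
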